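(* Let $X$ be a connected thin combinatorial $2$-complex that satisfies the Perimeter-reduction hypothesis, and let $\mathcal H\le\mathrm{Aut}(X)$ be finitely generated relative to a finite collection of $0$-cell stabilizers. Then there exists a connected $\mathcal H$-cocompact subcomplex $Y\subset X$ with no missing $3$-shells.
   Context: $\mathrm{Aut}(X)$ is the group of cellular automorphisms. A side at a $1$-cell $x$ is a pair $(R,r)$, $R$ a $2$-cell, $r$ a $1$-cell of $\partial R$ mapping to $x$; $X$ is thin if each $1$-cell has finitely many sides. For a subcomplex $Y$, $\mathrm{Missing}_X(Y,x)$ is the set of sides at $x$ not factoring through $Y$. $Y$ is $\mathcal H$-cocompact if $\mathcal H$-invariant with finitely many $\mathcal H$-orbits of cells; then $\mathrm{per}(Y,\mathcal H)=\sum_i|\mathrm{Missing}_X(Y,y_i)|$ over representatives $y_i$ of the $\mathcal H$-orbits of $1$-cells of $Y$. A piece is a nontrivial path factoring through boundary cycles of two $2$-cells in essentially distinct ways (no compatible homeomorphism of boundary cycles). A missing $3$-shell of $Y$ is a $2$-cell $R\not\subset Y$ with $\partial R=QS$, $Q$ a path in $Y$, $S$ a concatenation of at most $3$ pieces. $\mathcal H$ is finitely generated relative to a finite collection of $0$-cell stabilizers if for some $0$-cells $v_1,\dots,v_n$ and finite $S\subset\mathcal H$, $S\cup\bigcup_i\mathrm{Stab}_{\mathcal H}(v_i)$ generates $\mathcal H$. $X$ satisfies the Perimeter-reduction hypothesis if for every such relatively finitely generated $\mathcal H$ and every connected $\mathcal H$-cocompact $Y\subset X$ having a missing $3$-shell,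 there is a connected $\mathcal H$-cocompact $Y'\subset X$ with $\mathrm{per}(Y',\mathcal H)<\mathrm{per}(Y,\mathcal H)$. *)

theory Defs
  imports Main
begin

text \<open>A combinatorial 2-complex is given by a set of 0-cells (vertices), a set of
darts (oriented 1-cells; each 1-cell is a pair {d, dinv d} of opposite darts),
a set of 2-cells, and for each 2-cell R its attaching map: a closed, nonempty
combinatorial path (cyclic list of darts) bd R.  Position i of bd R is the i-th
1-cell of the boundary circle of R, and bd R ! i is the dart it maps to.\<close>

record ('v,'d,'f) cx2 =
  verts :: "'v set"
  darts :: "'d set"
  faces :: "'f set"
  src   :: "'d \<Rightarrow> 'v"
  dinv  :: "'d \<Rightarrow> 'd"
  bd    :: "'f \<Rightarrow> 'd list"

definition tgt :: "('v,'d,'f) cx2 \<Rightarrow> 'd \<Rightarrow> 'v" where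
  "tgt X d = src X (dinv X d)"

definition is_path :: "('v,'d,'f) cx2 \<Rightarrow> 'd list \<Rightarrow> bool" where
  "is_path X P \<longleftrightarrow> set P \<subseteq> darts X \<and>
     (\<forall>i. Suc i < length P \<longrightarrow> tgt X (P ! i) = src X (P ! Suc i))"

definition complex2 :: "('v,'d,'f) cx2 \<Rightarrow> bool" where
  "complex2 X \<longleftrightarrow>
     (\<forall>d\<in>darts X. dinv X d \<in> darts X \<and> dinv X (dinv X d) = d \<and> dinv X d \<noteq> d
                   \<and> src X d \<in> verts X) \<and>
     (\<forall>R\<in>faces X. bd X R \<noteq> [] \<and> is_path X (bd X R) \<and>
                   tgt X (last (bd X R)) = src X (hd (bd X R)))"

definition edge :: "('v,'d,'f) cx2 \<Rightarrow> 'd \<Rightarrow> 'd set" where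
  "edge X d = {d, dinv X d}"

definition one_cells :: "('v,'d,'f) cx2 \<Rightarrow> 'd set set" where
  "one_cells X = edge X ` darts X"

definition sides :: "('v,'d,'f) cx2 \<Rightarrow> 'd set \<Rightarrow> ('f \<times> nat) set" where
  "sides X x = {(R, i). R \<in> faces X \<and> i < length (bd X R) \<and> edge X (bd X R ! i) = x}"

definition thin :: "('v,'d,'f) cx2 \<Rightarrow> bool" where
  "thin X \<longleftrightarrow> (\<forall>x\<in>one_cells X. finite (sides X x))"

type_synonym ('v,'d,'f) subcx = "'v set \<times> 'd set \<times> 'f set"

definition sV :: "('v,'d,'f) subcx \<Rightarrow> 'v set" where "sV Y = fst Y"
definition sD :: "('v,'d,'f) subcx \<Rightarrow> 'd set" where "sD Y = fst (snd Y)"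
definition sF :: "('v,'d,'f) subcx \<Rightarrow> 'f set" where "sF Y = snd (snd Y)"

definition is_subcx :: "('v,'d,'f) cx2 \<Rightarrow> ('v,'d,'f) subcx \<Rightarrow> bool" where
  "is_subcx X Y \<longleftrightarrow> sV Y \<subseteq> verts X \<and> sD Y \<subseteq> darts X \<and> sF Y \<subseteq> faces X \<and>
     (\<forall>d\<in>sD Y. dinv X d \<in> sD Y \<and> src X d \<in> sV Y) \<and>
     (\<forall>R\<in>sF Y. set (bd X R) \<subseteq> sD Y)"

definition the_whole :: "('v,'d,'f) cx2 \<Rightarrow> ('v,'d,'f) subcx" where
  "the_whole X = (verts X, darts X, faces X)"

definition connected_sub :: "('v,'d,'f) cx2 \<Rightarrow> ('v,'d,'f) subcx \<Rightarrow> bool" where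
  "connected_sub X Y \<longleftrightarrow> sV Y \<noteq> {} \<and>
     (\<forall>u\<in>sV Y. \<forall>v\<in>sV Y. (u, v) \<in> {(src X d, tgt X d) | d. d \<in> sD Y}\<^sup>*)"

definition connected_cx :: "('v,'d,'f) cx2 \<Rightarrow> bool" where
  "connected_cx X \<longleftrightarrow> connected_sub X (the_whole X)"

record ('v,'d,'f) aut =
  av :: "'v \<Rightarrow> 'v"
  ad :: "'d \<Rightarrow> 'd"
  af :: "'f \<Rightarrow> 'f"

text \<open>A cellular automorphism: bijections on cells (identity off the complex, for
extensionality) commuting with incidence, and carrying the boundary cycle of each
2-cell onto the boundary cycle of its image, up to rotation and reflection of the
boundary circle.\<close>
definition is_aut :: "('v,'d,'f) cx2 \<Rightarrow> ('v,'d,'f) aut \<Rightarrow> bool" where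
  "is_aut X g \<longleftrightarrow>
     bij_betw (av g) (verts X) (verts X) \<and> bij_betw (ad g) (darts X) (darts X) \<and>
     bij_betw (af g) (faces X) (faces X) \<and>
     (\<forall>v. v \<notin> verts X \<longrightarrow> av g v = v) \<and> (\<forall>d. d \<notin> darts X \<longrightarrow> ad g d = d) \<and>
     (\<forall>R. R \<notin> faces X \<longrightarrow> af g R = R) \<and>
     (\<forall>d\<in>darts X. src X (ad g d) = av g (src X d) \<and> ad g (dinv X d) = dinv X (ad g d)) \<and>
     (\<forall>R\<in>faces X. \<exists>k. bd X (af g R) = rotate k (map (ad g) (bd X R)) \<or>
                       bd X (af g R) = rotate k (rev (map (dinv X \<circ> ad g) (bd X R))))"

definition aut_id :: "('v,'d,'f) aut" where
  "aut_id = \<lparr>av = id, ad = id, af = id\<rparr>"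

definition aut_comp :: "('v,'d,'f) aut \<Rightarrow> ('v,'d,'f) aut \<Rightarrow> ('v,'d,'f) aut" where
  "aut_comp g h = \<lparr>av = av g \<circ> av h, ad = ad g \<circ> ad h, af = af g \<circ> af h\<rparr>"

definition aut_subgroup :: "('v,'d,'f) cx2 \<Rightarrow> ('v,'d,'f) aut set \<Rightarrow> bool" where
  "aut_subgroup X H \<longleftrightarrow> (\<forall>g\<in>H. is_aut X g) \<and> aut_id \<in> H \<and>
     (\<forall>g\<in>H. \<forall>h\<in>H. aut_comp g h \<in> H) \<and>
     (\<forall>g\<in>H. \<exists>h\<in>H. aut_comp h g = aut_id)"

definition generates :: "('v,'d,'f) cx2 \<Rightarrow> ('v,'d,'f) aut set \<Rightarrow> ('v,'d,'f) aut set \<Rightarrow> bool" where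
  "generates X A H \<longleftrightarrow> A \<subseteq> H \<and>
     (\<forall>K. K \<subseteq> H \<and> aut_subgroup X K \<and> A \<subseteq> K \<longrightarrow> K = H)"

definition stab :: "('v,'d,'f) aut set \<Rightarrow> 'v \<Rightarrow> ('v,'d,'f) aut set" where
  "stab H v = {g \<in> H. av g v = v}"

definition rel_fin_gen :: "('v,'d,'f) cx2 \<Rightarrow> ('v,'d,'f) aut set \<Rightarrow> bool" where
  "rel_fin_gen X H \<longleftrightarrow> (\<exists>vs S. finite vs \<and> vs \<subseteq> verts X \<and> finite S \<and> S \<subseteq> H \<and>
      generates X (S \<union> (\<Union>v\<in>vs. stab H v)) H)"

definition orbV :: "('v,'d,'f) aut set \<Rightarrow> 'v \<Rightarrow> 'v set" where
  "orbV H v = {av g v | g. g \<in> H}"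

definition orb1 :: "('v,'d,'f) cx2 \<Rightarrow> ('v,'d,'f) aut set \<Rightarrow> 'd set \<Rightarrow> 'd set set" where
  "orb1 X H x = {edge X (ad g d) | g d. g \<in> H \<and> d \<in> x}"

definition orbF :: "('v,'d,'f) aut set \<Rightarrow> 'f \<Rightarrow> 'f set" where
  "orbF H R = {af g R | g. g \<in> H}"

definition invariant :: "('v,'d,'f) aut set \<Rightarrow> ('v,'d,'f) subcx \<Rightarrow> bool" where
  "invariant H Y \<longleftrightarrow> (\<forall>g\<in>H. av g ` sV Y \<subseteq> sV Y \<and> ad g ` sD Y \<subseteq> sD Y \<and> af g ` sF Y \<subseteq> sF Y)"

definition cocompact :: "('v,'d,'f) cx2 \<Rightarrow> ('v,'d,'f) aut set \<Rightarrow> ('v,'d,'f) subcx \<Rightarrow> bool" where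
  "cocompact X H Y \<longleftrightarrow> invariant H Y \<and> finite (orbV H ` sV Y) \<and>
     finite (orb1 X H ` edge X ` sD Y) \<and> finite (orbF H ` sF Y)"

definition Missing :: "('v,'d,'f) cx2 \<Rightarrow> ('v,'d,'f) subcx \<Rightarrow> 'd set \<Rightarrow> ('f \<times> nat) set" where
  "Missing X Y x = {(R, i). (R, i) \<in> sides X x \<and> R \<notin> sF Y}"

definition per :: "('v,'d,'f) cx2 \<Rightarrow> ('v,'d,'f) subcx \<Rightarrow> ('v,'d,'f) aut set \<Rightarrow> nat" where
  "per X Y H = (\<Sum>ob\<in>orb1 X H ` edge X ` sD Y. card (Missing X Y (SOME x. x \<in> ob)))"

text \<open>Oriented positions on the boundary circle of R: (k, True) is the k-th 1-cell
of the circle (indices mod the length) traversed in the direction of bd R,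
(k, False) the same 1-cell traversed backwards.\<close>
definition odart :: "('v,'d,'f) cx2 \<Rightarrow> 'f \<Rightarrow> int \<times> bool \<Rightarrow> 'd" where
  "odart X R p = (let d = bd X R ! nat (fst p mod int (length (bd X R)))
                  in if snd p then d else dinv X d)"

definition walk :: "nat \<Rightarrow> int \<times> bool \<Rightarrow> int \<times> bool" where
  "walk j p = (if snd p then fst p + int j else fst p - int j, snd p)"

definition lift :: "('v,'d,'f) cx2 \<Rightarrow> 'd list \<Rightarrow> 'f \<Rightarrow> int \<times> bool \<Rightarrow> bool" where
  "lift X P R p \<longleftrightarrow> (\<forall>j<length P. P ! j = odart X R (walk j p))"

text \<open>Cellular homeomorphisms of boundary circles: rotations (c + k) and
reflections (c - k, reversing orientation).\<close>
definition chom :: "int \<Rightarrow> bool \<Rightarrow> int \<times> bool \<Rightarrow> int \<times> bool" where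
  "chom c e p = (if e then (c + fst p, snd p) else (c - fst p, \<not> snd p))"

definition compatible_hom :: "('v,'d,'f) cx2 \<Rightarrow> 'f \<Rightarrow> 'f \<Rightarrow> int \<Rightarrow> bool \<Rightarrow> bool" where
  "compatible_hom X R1 R2 c e \<longleftrightarrow> length (bd X R1) = length (bd X R2) \<and>
     (\<forall>p. odart X R2 (chom c e p) = odart X R1 p)"

definition same_opos :: "nat \<Rightarrow> int \<times> bool \<Rightarrow> int \<times> bool \<Rightarrow> bool" where
  "same_opos n p q \<longleftrightarrow> fst p mod int n = fst q mod int n \<and> snd p = snd q"

definition piece :: "('v,'d,'f) cx2 \<Rightarrow> 'd list \<Rightarrow> bool" where
  "piece X P \<longleftrightarrow> P \<noteq> [] \<and> is_path X P \<and>
     (\<exists>R1 R2 p1 p2. R1 \<in> faces X \<and> R2 \<in> faces X \<and> lift X P R1 p1 \<and> lift X P R2 p2 \<and>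
        \<not> (\<exists>c e. compatible_hom X R1 R2 c e \<and>
                 same_opos (length (bd X R2)) (chom c e p1) p2))"

definition missing_3shell :: "('v,'d,'f) cx2 \<Rightarrow> ('v,'d,'f) subcx \<Rightarrow> 'f \<Rightarrow> bool" where
  "missing_3shell X Y R \<longleftrightarrow> R \<in> faces X \<and> R \<notin> sF Y \<and>
     (\<exists>k Q S Ps. rotate k (bd X R) = Q @ S \<and> set Q \<subseteq> sD Y \<and>
        (Q = [] \<longrightarrow> src X (hd S) \<in> sV Y) \<and>
        length Ps \<le> 3 \<and> (\<forall>P\<in>set Ps. piece X P) \<and> S = concat Ps)"

definition perimeter_reduction :: "('v,'d,'f) cx2 \<Rightarrow> bool" where
  "perimeter_reduction X \<longleftrightarrow>
     (\<forall>H Y. aut_subgroup X H \<and> rel_fin_gen X H \<and> is_subcx X Y \<and> connected_sub X Y \<and>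
            cocompact X H Y \<and> (\<exists>R. missing_3shell X Y R) \<longrightarrow>
        (\<exists>Y'. is_subcx X Y' \<and> connected_sub X Y' \<and> cocompact X H Y' \<and>
              per X Y' H < per X Y H))"

end

theory Submission
  imports Defs
begin

definition ER :: "('v,'d,'f) cx2 \<Rightarrow> 'd set \<Rightarrow> ('v \<times> 'v) set" where
  "ER X D = {(src X d, tgt X d) | d. d \<in> D}"

lemma ER_mono: "D \<subseteq> D' \<Longrightarrow> (ER X D)\<^sup>* \<subseteq> (ER X D')\<^sup>*"
  unfolding ER_def by (rule rtrancl_mono) blast

lemma ER_conn_eq: "connected_sub X Y \<longleftrightarrow> sV Y \<noteq> {} \<and>
     (\<forall>u\<in>sV Y. \<forall>v\<in>sV Y. (u, v) \<in> (ER X (sD Y))\<^sup>*)"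
  unfolding connected_sub_def ER_def by simp

lemma path_lemma:
  assumes cx: "complex2 X" and ab: "(a,b) \<in> (ER X (darts X))\<^sup>*"
  shows "\<exists>D. finite D \<and> D \<subseteq> darts X \<and> (\<forall>d\<in>D. dinv X d \<in> D) \<and>
     (\<forall>d\<in>D. (a, src X d) \<in> (ER X D)\<^sup>*) \<and> (a,b) \<in> (ER X D)\<^sup>*"
  using ab
proof (induction rule: rtrancl_induct)
  case base
  show ?case by (rule exI[of _ "{}"]) simp
next
  case (step b c)
  then obtain D where D: "finite D" "D \<subseteq> darts X" "\<forall>d\<in>D. dinv X d \<in> D"
    "\<forall>d\<in>D. (a, src X d) \<in> (ER X D)\<^sup>*" "(a,b) \<in> (ER X D)\<^sup>*" by blast
  from step(2) obtain d where d: "d \<in> darts X" "b = src X d" "c = tgt X d"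
    unfolding ER_def by blast
  have di: "dinv X d \<in> darts X" "dinv X (dinv X d) = d" using cx d(1) unfolding complex2_def by auto
  define D' where "D' = D \<union> {d, dinv X d}"
  have sub: "(ER X D)\<^sup>* \<subseteq> (ER X D')\<^sup>*" by (rule ER_mono) (auto simp: D'_def)
  have ab': "(a,b) \<in> (ER X D')\<^sup>*" using D(5) sub by blast
  have bc: "(b,c) \<in> ER X D'" unfolding ER_def D'_def using d by blast
  have ac: "(a,c) \<in> (ER X D')\<^sup>*" using ab' bc by (rule rtrancl_into_rtrancl)
  have "\<forall>e\<in>D'. (a, src X e) \<in> (ER X D')\<^sup>*"
  proof
    fix e assume "e \<in> D'"
    then consider "e \<in> D" | "e = d" | "e = dinv X d" unfolding D'_def by blast
    then show "(a, src X e) \<in> (ER X D')\<^sup>*"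
    proof cases
      case 1 then show ?thesis using D(4) sub by blast
    next
      case 2 then show ?thesis using ab' d by simp
    next
      case 3 then show ?thesis using ac d by (simp add: tgt_def)
    qed
  qed
  moreover have "finite D'" "D' \<subseteq> darts X" "\<forall>e\<in>D'. dinv X e \<in> D'"
    using D d di by (auto simp: D'_def)
  ultimately show ?case using ac by blast
qed

lemma paths_lemma:
  assumes cx: "complex2 X" and fin: "finite T" and T: "\<forall>t\<in>T. (a,t) \<in> (ER X (darts X))\<^sup>*"
  shows "\<exists>D. finite D \<and> D \<subseteq> darts X \<and> (\<forall>d\<in>D. dinv X d \<in> D) \<and>
     (\<forall>d\<in>D. (a, src X d) \<in> (ER X D)\<^sup>*) \<and> (\<forall>t\<in>T. (a,t) \<in> (ER X D)\<^sup>*)"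
  using fin T
proof (induction rule: finite_induct)
  case empty
  show ?case by (rule exI[of _ "{}"]) simp
next
  case (insert t T)
  have "\<forall>t\<in>T. (a,t) \<in> (ER X (darts X))\<^sup>*" using insert.prems by simp
  from insert.IH[OF this] obtain D where D: "finite D" "D \<subseteq> darts X" "\<forall>d\<in>D. dinv X d \<in> D"
    "\<forall>d\<in>D. (a, src X d) \<in> (ER X D)\<^sup>*" "\<forall>t\<in>T. (a,t) \<in> (ER X D)\<^sup>*" by blast
  have at: "(a,t) \<in> (ER X (darts X))\<^sup>*" using insert.prems by simp
  obtain D2 where D2: "finite D2" "D2 \<subseteq> darts X" "\<forall>d\<in>D2. dinv X d \<in> D2"
    "\<forall>d\<in>D2. (a, src X d) \<in> (ER X D2)\<^sup>*" "(a,t) \<in> (ER X D2)\<^sup>*"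
    using path_lemma[OF cx at] by blast
  have s1: "(ER X D)\<^sup>* \<subseteq> (ER X (D \<union> D2))\<^sup>*" by (rule ER_mono) auto
  have s2: "(ER X D2)\<^sup>* \<subseteq> (ER X (D \<union> D2))\<^sup>*" by (rule ER_mono) auto
  have "finite (D \<union> D2)" "D \<union> D2 \<subseteq> darts X" "\<forall>d\<in>D \<union> D2. dinv X d \<in> D \<union> D2"
    using D D2 by auto
  moreover have "\<forall>d\<in>D \<union> D2. (a, src X d) \<in> (ER X (D \<union> D2))\<^sup>*"
    using D(4) D2(4) s1 s2 by blast
  moreover have "\<forall>u\<in>insert t T. (a,u) \<in> (ER X (D \<union> D2))\<^sup>*"
    using D(5) D2(5) s1 s2 by blast
  ultimately show ?case by blast
qed

lemma is_autD:
  assumes "is_aut X g" "d \<in> darts X"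
  shows "src X (ad g d) = av g (src X d)" "ad g (dinv X d) = dinv X (ad g d)"
  using assms unfolding is_aut_def by blast+

lemma transport:
  assumes cx: "complex2 X" and g: "is_aut X g" and DY: "DY \<subseteq> darts X" "ad g ` DY \<subseteq> DY"
    and ab: "(a,b) \<in> (ER X DY)\<^sup>*"
  shows "(av g a, av g b) \<in> (ER X DY)\<^sup>*"
  using ab
proof (induction rule: rtrancl_induct)
  case base then show ?case by simp
next
  case (step b c)
  from step(2) obtain d where d: "d \<in> DY" "b = src X d" "c = tgt X d"
    unfolding ER_def by blast
  have dd: "d \<in> darts X" using d DY by auto
  have di: "dinv X d \<in> darts X" using cx dd unfolding complex2_def by auto
  have "src X (ad g d) = av g b" using is_autD[OF g dd] d by simp
  moreover have "tgt X (ad g d) = av g c"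
    using is_autD[OF g dd] is_autD[OF g di] d unfolding tgt_def by simp
  moreover have "ad g d \<in> DY" using DY d by auto
  ultimately have "(av g b, av g c) \<in> ER X DY" unfolding ER_def by force
  with step(3) show ?case by (rule rtrancl_into_rtrancl)
qed

lemma ER_sym:
  assumes cx: "complex2 X" and DY: "DY \<subseteq> darts X" "\<forall>d\<in>DY. dinv X d \<in> DY"
    and ab: "(a,b) \<in> (ER X DY)\<^sup>*"
  shows "(b,a) \<in> (ER X DY)\<^sup>*"
proof -
  have "(ER X DY)\<inverse> \<subseteq> ER X DY"
  proof
    fix p assume "p \<in> (ER X DY)\<inverse>"
    then obtain d where d: "d \<in> DY" "p = (tgt X d, src X d)" unfolding ER_def by auto
    have "dinv X (dinv X d) = d" using cx d DY unfolding complex2_def by auto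
    then have "p = (src X (dinv X d), tgt X (dinv X d))" using d by (simp add: tgt_def)
    then show "p \<in> ER X DY" unfolding ER_def using d DY by blast
  qed
  then have "((ER X DY)\<inverse>)\<^sup>* \<subseteq> (ER X DY)\<^sup>*" by (rule rtrancl_mono)
  moreover have "(b,a) \<in> ((ER X DY)\<inverse>)\<^sup>*" using ab by (simp add: rtrancl_converse)
  ultimately show ?thesis by blast
qed


lemma av_comp[simp]: "av (aut_comp g h) = av g \<circ> av h" by (simp add: aut_comp_def)
lemma ad_comp[simp]: "ad (aut_comp g h) = ad g \<circ> ad h" by (simp add: aut_comp_def)
lemma av_id[simp]: "av aut_id = id" by (simp add: aut_id_def)
lemma ad_id[simp]: "ad aut_id = id" by (simp add: aut_id_def)

lemma inv_av: "aut_comp h g = aut_id \<Longrightarrow> av h (av g x) = x"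
  by (drule arg_cong[where f=av]) (simp add: fun_eq_iff)
lemma inv_ad: "aut_comp h g = aut_id \<Longrightarrow> ad h (ad g x) = x"
  by (drule arg_cong[where f=ad]) (simp add: fun_eq_iff)

lemma is_aut_maps:
  assumes "is_aut X g"
  shows "v \<in> verts X \<Longrightarrow> av g v \<in> verts X" "d \<in> darts X \<Longrightarrow> ad g d \<in> darts X"
  using assms unfolding is_aut_def bij_betw_def by blast+

lemma orbV_eq:
  assumes H: "aut_subgroup X H" and g: "g \<in> H"
  shows "orbV H (av g w) = orbV H w"
proof -
  obtain h where h: "h \<in> H" "aut_comp h g = aut_id" using H g unfolding aut_subgroup_def by blast
  have cl: "\<And>a b. a \<in> H \<Longrightarrow> b \<in> H \<Longrightarrow> aut_comp a b \<in> H" using H unfolding aut_subgroup_def by blast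
  show ?thesis
  proof
    show "orbV H (av g w) \<subseteq> orbV H w"
    proof
      fix x assume "x \<in> orbV H (av g w)"
      then obtain k where k: "k \<in> H" "x = av k (av g w)" unfolding orbV_def by blast
      then have "x = av (aut_comp k g) w" by simp
      then show "x \<in> orbV H w" unfolding orbV_def using cl[OF k(1) g] by blast
    qed
  next
    show "orbV H w \<subseteq> orbV H (av g w)"
    proof
      fix x assume "x \<in> orbV H w"
      then obtain k where k: "k \<in> H" "x = av k w" unfolding orbV_def by blast
      then have "x = av (aut_comp k h) (av g w)" using inv_av[OF h(2)] by simp
      then show "x \<in> orbV H (av g w)" unfolding orbV_def using cl[OF k(1) h(1)] by blast
    qed
  qed
qed

lemma orb1_eq:
  assumes H: "aut_subgroup X H" and g: "g \<in> H" and d: "d \<in> darts X"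
  shows "orb1 X H (edge X (ad g d)) = orb1 X H (edge X d)"
proof -
  obtain h where h: "h \<in> H" "aut_comp h g = aut_id" using H g unfolding aut_subgroup_def by blast
  have cl: "\<And>a b. a \<in> H \<Longrightarrow> b \<in> H \<Longrightarrow> aut_comp a b \<in> H" using H unfolding aut_subgroup_def by blast
  have ga: "is_aut X g" using H g unfolding aut_subgroup_def by blast
  have e: "edge X (ad g d) = ad g ` edge X d"
    using is_autD(2)[OF ga d] by (simp add: edge_def)
  show ?thesis
  proof
    show "orb1 X H (edge X (ad g d)) \<subseteq> orb1 X H (edge X d)"
    proof
      fix x assume "x \<in> orb1 X H (edge X (ad g d))"
      then obtain k e' where k: "k \<in> H" "e' \<in> edge X d" "x = edge X (ad k (ad g e'))"
        unfolding orb1_def e by blast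
      then have "x = edge X (ad (aut_comp k g) e')" by simp
      then show "x \<in> orb1 X H (edge X d)" unfolding orb1_def using cl[OF k(1) g] k(2) by blast
    qed
  next
    show "orb1 X H (edge X d) \<subseteq> orb1 X H (edge X (ad g d))"
    proof
      fix x assume "x \<in> orb1 X H (edge X d)"
      then obtain k e' where k: "k \<in> H" "e' \<in> edge X d" "x = edge X (ad k e')"
        unfolding orb1_def by blast
      then have "x = edge X (ad (aut_comp k h) (ad g e'))" using inv_ad[OF h(2)] by simp
      moreover have "ad g e' \<in> edge X (ad g d)" using k(2) e by blast
      ultimately show "x \<in> orb1 X H (edge X (ad g d))" unfolding orb1_def using cl[OF k(1) h(1)] by blast
    qed
  qed
qed


lemma init_exists:
  assumes cx: "complex2 X" and conn: "connected_cx X"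
    and H: "aut_subgroup X H" and rfg: "rel_fin_gen X H"
  shows "\<exists>Y. is_subcx X Y \<and> connected_sub X Y \<and> cocompact X H Y"
proof -
  obtain vs S where vsS: "finite vs" "vs \<subseteq> verts X" "finite S" "S \<subseteq> H"
      "generates X (S \<union> (\<Union>v\<in>vs. stab H v)) H"
    using rfg unfolding rel_fin_gen_def by blast
  have Hid: "aut_id \<in> H" and Haut: "\<And>g. g \<in> H \<Longrightarrow> is_aut X g"
    and Hcl: "\<And>a b. a \<in> H \<Longrightarrow> b \<in> H \<Longrightarrow> aut_comp a b \<in> H"
    and Hinv: "\<And>g. g \<in> H \<Longrightarrow> \<exists>h\<in>H. aut_comp h g = aut_id"
    using H unfolding aut_subgroup_def by blast+
  have vne: "verts X \<noteq> {}" and vconn: "\<And>u v. u \<in> verts X \<Longrightarrow> v \<in> verts X \<Longrightarrow> (u,v) \<in> (ER X (darts X))\<^sup>*"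
    using conn unfolding connected_cx_def ER_conn_eq the_whole_def sV_def sD_def by auto
  obtain v0 where v0: "v0 \<in> verts X" using vne by blast
  define T where "T = insert v0 (vs \<union> (\<lambda>s. av s v0) ` S)"
  have Tfin: "finite T" unfolding T_def using vsS by simp
  have Tv: "T \<subseteq> verts X" unfolding T_def using vsS v0 is_aut_maps(1)[OF Haut] by blast
  obtain D where D: "finite D" "D \<subseteq> darts X" "\<forall>d\<in>D. dinv X d \<in> D"
     "\<forall>d\<in>D. (v0, src X d) \<in> (ER X D)\<^sup>*" "\<forall>t\<in>T. (v0,t) \<in> (ER X D)\<^sup>*"
    using paths_lemma[OF cx Tfin, of v0] vconn v0 Tv by blast
  define W where "W = insert v0 (src X ` D)"
  define VY where "VY = {av g w | g w. g \<in> H \<and> w \<in> W}"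
  define DY where "DY = {ad g d | g d. g \<in> H \<and> d \<in> D}"
  define Y where "Y = (VY, DY, {} :: 'c set)"
  have sY: "sV Y = VY" "sD Y = DY" "sF Y = {}" unfolding Y_def sV_def sD_def sF_def by simp_all
  have Wv: "W \<subseteq> verts X" unfolding W_def using v0 D(2) cx unfolding complex2_def by blast
  have DYd: "DY \<subseteq> darts X" unfolding DY_def using D(2) is_aut_maps(2)[OF Haut] by blast
  have VYv: "VY \<subseteq> verts X" unfolding VY_def using Wv is_aut_maps(1)[OF Haut] by blast
  have DYinv: "\<forall>d\<in>DY. dinv X d \<in> DY"
  proof
    fix x assume "x \<in> DY"
    then obtain g d where gd: "g \<in> H" "d \<in> D" "x = ad g d" unfolding DY_def by blast
    have "dinv X x = ad g (dinv X d)" using is_autD(2)[OF Haut[OF gd(1)]] gd D(2) by auto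
    then show "dinv X x \<in> DY" unfolding DY_def using gd D(3) by blast
  qed
  have DYsrc: "\<forall>d\<in>DY. src X d \<in> VY"
  proof
    fix x assume "x \<in> DY"
    then obtain g d where gd: "g \<in> H" "d \<in> D" "x = ad g d" unfolding DY_def by blast
    have "src X x = av g (src X d)" using is_autD(1)[OF Haut[OF gd(1)]] gd D(2) by auto
    then show "src X x \<in> VY" unfolding VY_def W_def using gd by blast
  qed
  have DYinvar: "\<And>g. g \<in> H \<Longrightarrow> ad g ` DY \<subseteq> DY"
  proof -
    fix g assume g: "g \<in> H"
    show "ad g ` DY \<subseteq> DY"
    proof
      fix x assume "x \<in> ad g ` DY"
      then obtain h d where hd: "h \<in> H" "d \<in> D" "x = ad g (ad h d)" unfolding DY_def by blast
      then have "x = ad (aut_comp g h) d" by simp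
      then show "x \<in> DY" unfolding DY_def using Hcl[OF g hd(1)] hd(2) by blast
    qed
  qed
  have VYinvar: "\<And>g. g \<in> H \<Longrightarrow> av g ` VY \<subseteq> VY"
  proof -
    fix g assume g: "g \<in> H"
    show "av g ` VY \<subseteq> VY"
    proof
      fix x assume "x \<in> av g ` VY"
      then obtain h w where hd: "h \<in> H" "w \<in> W" "x = av g (av h w)" unfolding VY_def by blast
      then have "x = av (aut_comp g h) w" by simp
      then show "x \<in> VY" unfolding VY_def using Hcl[OF g hd(1)] hd(2) by blast
    qed
  qed
  have DDY: "D \<subseteq> DY" unfolding DY_def using Hid by force
  have EDY: "(ER X D)\<^sup>* \<subseteq> (ER X DY)\<^sup>*" by (rule ER_mono[OF DDY])
  have Wc: "\<And>w. w \<in> W \<Longrightarrow> (v0, w) \<in> (ER X DY)\<^sup>*"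
    using D(4) EDY unfolding W_def by blast
  have Tc: "\<And>t. t \<in> T \<Longrightarrow> (v0, t) \<in> (ER X DY)\<^sup>*" using D(5) EDY by blast
  have tr: "\<And>g a b. g \<in> H \<Longrightarrow> (a,b) \<in> (ER X DY)\<^sup>* \<Longrightarrow> (av g a, av g b) \<in> (ER X DY)\<^sup>*"
    using transport[OF cx Haut DYd DYinvar] by blast
  have sym: "\<And>a b. (a,b) \<in> (ER X DY)\<^sup>* \<Longrightarrow> (b,a) \<in> (ER X DY)\<^sup>*"
    using ER_sym[OF cx DYd DYinv] by blast
  define K where "K = {g \<in> H. (v0, av g v0) \<in> (ER X DY)\<^sup>*}"
  have KH: "K \<subseteq> H" unfolding K_def by blast
  have Ksub: "aut_subgroup X K"
    unfolding aut_subgroup_def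
  proof (intro conjI ballI)
    fix g assume "g \<in> K" then show "is_aut X g" using Haut unfolding K_def by blast
  next
    show "aut_id \<in> K" unfolding K_def using Hid by simp
  next
    fix g h assume g: "g \<in> K" and h: "h \<in> K"
    have "(av g v0, av g (av h v0)) \<in> (ER X DY)\<^sup>*" using g h tr unfolding K_def by blast
    moreover have "(v0, av g v0) \<in> (ER X DY)\<^sup>*" using g unfolding K_def by blast
    ultimately have "(v0, av g (av h v0)) \<in> (ER X DY)\<^sup>*" by (rule rtrancl_trans[rotated])
    moreover have "aut_comp g h \<in> H" using g h Hcl unfolding K_def by blast
    ultimately show "aut_comp g h \<in> K" unfolding K_def by simp
  next
    fix g assume g: "g \<in> K"
    obtain h where h: "h \<in> H" "aut_comp h g = aut_id" using Hinv g unfolding K_def by blast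
    have "(av h v0, av h (av g v0)) \<in> (ER X DY)\<^sup>*" using g h tr unfolding K_def by blast
    then have "(v0, av h v0) \<in> (ER X DY)\<^sup>*" using inv_av[OF h(2)] sym by simp
    then show "\<exists>h\<in>K. aut_comp h g = aut_id" unfolding K_def using h by blast
  qed
  have AK: "S \<union> (\<Union>v\<in>vs. stab H v) \<subseteq> K"
  proof
    fix g assume "g \<in> S \<union> (\<Union>v\<in>vs. stab H v)"
    then consider "g \<in> S" | v where "v \<in> vs" "g \<in> H" "av g v = v" unfolding stab_def by blast
    then show "g \<in> K"
    proof cases
      case 1 then show ?thesis unfolding K_def using vsS(4) Tc T_def by blast
    next
      case 2
      have "(v0, v) \<in> (ER X DY)\<^sup>*" using Tc T_def 2 by blast
      then have a: "(av g v0, v) \<in> (ER X DY)\<^sup>*" using tr[OF 2(2)] 2(3) by fastforce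
      have "(v0, av g v0) \<in> (ER X DY)\<^sup>*"
        using rtrancl_trans[OF \<open>(v0, v) \<in> _\<close> sym[OF a]] .
      then show ?thesis unfolding K_def using 2 by blast
    qed
  qed
  have KeqH: "K = H"
  proof -
    have "\<forall>K. K \<subseteq> H \<and> aut_subgroup X K \<and> S \<union> (\<Union>v\<in>vs. stab H v) \<subseteq> K \<longrightarrow> K = H"
      using vsS(5) unfolding generates_def by (rule conjunct2)
    then show ?thesis using KH Ksub AK by blast
  qed
  have VYc: "\<And>u. u \<in> VY \<Longrightarrow> (v0, u) \<in> (ER X DY)\<^sup>*"
  proof -
    fix u assume "u \<in> VY"
    then obtain g w where gw: "g \<in> H" "w \<in> W" "u = av g w" unfolding VY_def by blast
    have "(av g v0, u) \<in> (ER X DY)\<^sup>*" using tr[OF gw(1) Wc[OF gw(2)]] gw(3) by simp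
    moreover have "(v0, av g v0) \<in> (ER X DY)\<^sup>*" using gw(1) KeqH unfolding K_def by blast
    ultimately show "(v0, u) \<in> (ER X DY)\<^sup>*" by (rule rtrancl_trans[rotated])
  qed
  have v0VY: "v0 \<in> VY" unfolding VY_def W_def using Hid by force
  have "is_subcx X Y" unfolding is_subcx_def sY using VYv DYd DYinv DYsrc by blast
  moreover have "connected_sub X Y" unfolding ER_conn_eq sY
  proof (intro conjI ballI)
    show "VY \<noteq> {}" using v0VY by blast
  next
    fix u v assume "u \<in> VY" "v \<in> VY"
    then have "(u, v0) \<in> (ER X DY)\<^sup>*" "(v0, v) \<in> (ER X DY)\<^sup>*" using VYc sym by blast+
    then show "(u, v) \<in> (ER X DY)\<^sup>*" by (rule rtrancl_trans)
  qed
  moreover have "cocompact X H Y"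
  proof -
    have inv: "invariant H Y" unfolding invariant_def sY using VYinvar DYinvar by blast
    have "orbV H ` VY \<subseteq> orbV H ` W"
    proof
      fix x assume "x \<in> orbV H ` VY"
      then obtain g w where gw: "g \<in> H" "w \<in> W" "x = orbV H (av g w)" unfolding VY_def by blast
      then show "x \<in> orbV H ` W" using orbV_eq[OF H gw(1)] by simp
    qed
    moreover have "finite W" unfolding W_def using D(1) by simp
    ultimately have f1: "finite (orbV H ` VY)" by (rule finite_subset[OF _ finite_imageI])
    have "orb1 X H ` edge X ` DY \<subseteq> orb1 X H ` edge X ` D"
    proof
      fix x assume "x \<in> orb1 X H ` edge X ` DY"
      then obtain g d where gd: "g \<in> H" "d \<in> D" "x = orb1 X H (edge X (ad g d))" unfolding DY_def by blast
      then show "x \<in> orb1 X H ` edge X ` D" using orb1_eq[OF H gd(1)] D(2) by blast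
    qed
    then have f2: "finite (orb1 X H ` edge X ` DY)"
      by (rule finite_subset) (simp add: D(1))
    show ?thesis unfolding cocompact_def sY using inv f1 f2 by (simp add: sY)
  qed
  ultimately show ?thesis by blast
qed

theorem lemma3p22:
  fixes X :: "('v,'d,'f) cx2" and H :: "('v,'d,'f) aut set"
  assumes "complex2 X" and "connected_cx X" and "thin X"
    and "perimeter_reduction X"
    and "aut_subgroup X H" and "rel_fin_gen X H"
  shows "\<exists>Y. is_subcx X Y \<and> connected_sub X Y \<and> cocompact X H Y \<and>
             \<not> (\<exists>R. missing_3shell X Y R)"
proof -
  define P where "P = (\<lambda>Y. is_subcx X Y \<and> connected_sub X Y \<and> cocompact X H Y)"
  obtain Y0 where "P Y0"
    using init_exists[OF assms(1,2,5,6)] unfolding P_def by blast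
  from ex_has_least_nat[where P=P and m="\<lambda>Y. per X Y H", OF this]
  obtain Y where Y: "P Y" and mn: "\<And>Y'. P Y' \<Longrightarrow> per X Y H \<le> per X Y' H"
    by blast
  have "\<not> (\<exists>R. missing_3shell X Y R)"
  proof
    assume ms: "\<exists>R. missing_3shell X Y R"
    have "\<exists>Y'. P Y' \<and> per X Y' H < per X Y H"
      using assms(4) assms(5,6) Y ms unfolding perimeter_reduction_def P_def by blast
    then obtain Y' where "P Y'" "per X Y' H < per X Y H" by blast
    then show False using mn[of Y'] by simp
  qed
  then show ?thesis using Y unfolding P_def by blast
qed

end
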